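(* Let $\mathbf L=\{L_1,\dots,L_n\}$ be a finite multiset of positive rationals, $k\in\mathbb N_{>0}$, $I\subseteq[1..n]$, and $f_l,f_u:I\to\mathbb N_{>0}$ such that (i) for every $i\in I$: $f_l(i)=1$ or $L_i/(f_l(i)-1)$ is infeasible; (ii) for every $i\in I$: $L_i/f_u(i)$ is feasible; (iii) for every $i'\in[1..n]\setminus I$: $L_{i'}$ is feasible but $L_{i'}\neq l^\star$. Then $l^\star\in\mathcal C(I,f_l,f_u)$.
   Context: For $l\in\mathbb Q_{>0}$: $m(l)=\sum_{i=1}^n\lfloor L_i/l\rfloor$, $c(l)=\sum_{i=1}^n(\lceil L_i/l\rceil-1)$; $l$ is feasible if $m(l)\ge k$. The optimal cut length $l^\star$ is the feasible length minimizing $c$ among feasible lengths (it exists, is unique, and equals the largest feasible length). For $I\subseteq[1..n]$ and $f_l:I\to\mathbb N$, $f_u:I\to\mathbb N\cup\{\infty\}$, the candidate multiset is $\mathcal C(I,f_l,f_u)=\biguplus_{i\in I}\{L_i/j : j\in\mathbb N,\ f_l(i)\le j\le f_u(i)\}$, where each pair $(i,j)$ contributes one occurrence. A triple $(I,f_l,f_u)$ satisfying (i)–(iii) is called an admissible restriction. *)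

theory Defs
  imports Complex_Main "HOL-Library.Multiset"
begin

definition m_pieces :: "(nat \<Rightarrow> rat) \<Rightarrow> nat \<Rightarrow> rat \<Rightarrow> int" where
  "m_pieces L n l = (\<Sum>i=1..n. \<lfloor>L i / l\<rfloor>)"

definition c_cuts :: "(nat \<Rightarrow> rat) \<Rightarrow> nat \<Rightarrow> rat \<Rightarrow> int" where
  "c_cuts L n l = (\<Sum>i=1..n. \<lceil>L i / l\<rceil> - 1)"

definition feasible :: "(nat \<Rightarrow> rat) \<Rightarrow> nat \<Rightarrow> nat \<Rightarrow> rat \<Rightarrow> bool" where
  "feasible L n k l \<longleftrightarrow> l > 0 \<and> m_pieces L n l \<ge> int k"

text \<open>The optimal cut length: the feasible length minimizing the number of cuts
  among feasible lengths (the paper asserts existence and uniqueness).\<close>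
definition opt_len :: "(nat \<Rightarrow> rat) \<Rightarrow> nat \<Rightarrow> nat \<Rightarrow> rat" where
  "opt_len L n k = (THE l. feasible L n k l \<and>
      (\<forall>l'. feasible L n k l' \<longrightarrow> c_cuts L n l \<le> c_cuts L n l'))"

text \<open>Candidate multiset C(I, f_l, f_u): one occurrence of L i / j for each pair (i, j)
  with i in I and f_l i \<le> j \<le> f_u i (here f_u is finite-valued).\<close>
definition candidates :: "(nat \<Rightarrow> rat) \<Rightarrow> nat set \<Rightarrow> (nat \<Rightarrow> nat) \<Rightarrow> (nat \<Rightarrow> nat) \<Rightarrow> rat multiset" where
  "candidates L I fl fu = (\<Sum>i\<in>I. mset (map (\<lambda>j. L i / of_nat j) [fl i..<Suc (fu i)]))"

end

theory Submission
  imports Defs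
begin

lemma m_mono:
  assumes "\<forall>i\<in>{1..n}. L i > 0" "0 < l" "l \<le> l'"
  shows "m_pieces L n l' \<le> m_pieces L n l"
  unfolding m_pieces_def
proof (intro sum_mono floor_mono)
  fix i assume "i \<in> {1..n}"
  then have "L i > 0" using assms by auto
  then show "L i / l' \<le> L i / l" using assms by (simp add: frac_le)
qed

lemma c_mono:
  assumes "\<forall>i\<in>{1..n}. L i > 0" "0 < l" "l \<le> l'"
  shows "c_cuts L n l' \<le> c_cuts L n l"
  unfolding c_cuts_def
proof (intro sum_mono diff_right_mono ceiling_mono)
  fix i assume "i \<in> {1..n}"
  then have "L i > 0" using assms by auto
  then show "L i / l' \<le> L i / l" using assms by (simp add: frac_le)
qed

lemma feas_down:
  assumes "\<forall>i\<in>{1..n}. L i > 0" "feasible L n k l'" "0 < l" "l \<le> l'"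
  shows "feasible L n k l"
  using assms m_mono[of n L l l'] unfolding feasible_def by auto

lemma round_up:
  assumes Lp: "\<forall>i\<in>{1..n}. L i > 0" and kp: "k > 0" and fe: "feasible L n k l"
  shows "\<exists>i j. i\<in>{1..n} \<and> 1 \<le> j \<and> j \<le> \<lfloor>L i / l\<rfloor> \<and> l \<le> L i / of_int j \<and> feasible L n k (L i / of_int j)"
proof -
  have lp: "l > 0" using fe unfolding feasible_def by auto
  define A where "A = {i\<in>{1..n}. 1 \<le> \<lfloor>L i / l\<rfloor>}"
  have nn: "\<forall>i\<in>{1..n}. 0 \<le> \<lfloor>L i / l\<rfloor>" using Lp lp by auto
  have Ane: "A \<noteq> {}"
  proof
    assume "A = {}"
    then have "\<forall>i\<in>{1..n}. \<lfloor>L i / l\<rfloor> = 0" proof (intro ballI)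
      fix i assume i: "i \<in> {1..n}"
      then have "\<not> 1 \<le> \<lfloor>L i / l\<rfloor>" using \<open>A = {}\<close> unfolding A_def by blast
      then show "\<lfloor>L i / l\<rfloor> = 0" proof -
        have "0 \<le> \<lfloor>L i / l\<rfloor>" using nn i by blast
        then show ?thesis using \<open>\<not> 1 \<le> \<lfloor>L i / l\<rfloor>\<close> by linarith
      qed
    qed
    then have "m_pieces L n l = 0" unfolding m_pieces_def by simp
    then show False using fe kp unfolding feasible_def by simp
  qed
  have Afin: "finite A" unfolding A_def by simp
  define g where "g i = L i / of_int \<lfloor>L i / l\<rfloor>" for i
  define l' where "l' = Min (g ` A)"
  have "l' \<in> g ` A" unfolding l'_def using Afin Ane by (intro Min_in) auto
  then obtain i0 where i0: "i0 \<in> A" "l' = g i0" by blast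
  have gl: "l \<le> g i" if "i \<in> A" for i
  proof -
    have f1: "1 \<le> \<lfloor>L i / l\<rfloor>" using that unfolding A_def by auto
    have "of_int \<lfloor>L i / l\<rfloor> \<le> L i / l" by simp
    then have "l * of_int \<lfloor>L i / l\<rfloor> \<le> L i" using lp by (simp add: le_divide_eq mult.commute)
    moreover have "(0::rat) < of_int \<lfloor>L i / l\<rfloor>" using f1 by simp
    ultimately show ?thesis unfolding g_def by (simp add: pos_le_divide_eq)
  qed
  have ll': "l \<le> l'" using gl i0 by auto
  have l'p: "l' > 0" using ll' lp by auto
  have mle: "m_pieces L n l \<le> m_pieces L n l'"
    unfolding m_pieces_def
  proof (rule sum_mono)
    fix i assume i: "i \<in> {1..n}"
    show "\<lfloor>L i / l\<rfloor> \<le> \<lfloor>L i / l'\<rfloor>"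
    proof (cases "i \<in> A")
      case True
      have f1: "1 \<le> \<lfloor>L i / l\<rfloor>" using True unfolding A_def by auto
      have Li: "L i > 0" using Lp i by auto
      have "l' \<le> g i" unfolding l'_def using Afin True by simp
      then have "L i / g i \<le> L i / l'" using l'p Li by (simp add: frac_le)
      moreover have "L i / g i = of_int \<lfloor>L i / l\<rfloor>" unfolding g_def using Li f1 by simp
      ultimately show ?thesis by (simp add: le_floor_iff)
    next
      case False
      then have "\<lfloor>L i / l\<rfloor> \<le> 0" using i unfolding A_def by auto
      moreover have "0 \<le> \<lfloor>L i / l'\<rfloor>" using Lp i l'p by (simp add: less_imp_le)
      ultimately show ?thesis by linarith
    qed
  qed
  have "feasible L n k l'" using fe mle l'p unfolding feasible_def by auto
  moreover have "i0 \<in> {1..n}" "1 \<le> \<lfloor>L i0 / l\<rfloor>" using i0(1) unfolding A_def by auto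
  ultimately show ?thesis using i0(2) ll' unfolding g_def by blast
qed

theorem mainTheorem5:
  fixes L :: "nat \<Rightarrow> rat" and n k :: nat and I :: "nat set" and fl fu :: "nat \<Rightarrow> nat"
  assumes n_pos: "n \<ge> 1"
    and L_pos: "\<forall>i\<in>{1..n}. L i > 0"
    and k_pos: "k > 0"
    and I_sub: "I \<subseteq> {1..n}"
    and fl_pos: "\<forall>i\<in>I. fl i > 0"
    and fu_pos: "\<forall>i\<in>I. fu i > 0"
    and cond_i: "\<forall>i\<in>I. fl i = 1 \<or> \<not> feasible L n k (L i / of_nat (fl i - 1))"
    and cond_ii: "\<forall>i\<in>I. feasible L n k (L i / of_nat (fu i))"
    and cond_iii: "\<forall>i\<in>{1..n} - I. feasible L n k (L i) \<and> L i \<noteq> opt_len L n k"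
  shows "opt_len L n k \<in># candidates L I fl fu"
proof -
  define mn where "mn = Min (L ` {1..n})"
  have mnin: "mn \<in> L ` {1..n}" unfolding mn_def using n_pos by (intro Min_in) auto
  have mnp: "mn > 0" using mnin L_pos by auto
  have mnle: "mn \<le> L i" if "i \<in> {1..n}" for i unfolding mn_def using that by simp
  define l0 where "l0 = mn / of_nat k"
  have l0p: "l0 > 0" unfolding l0_def using mnp k_pos by simp
  have fl0: "feasible L n k l0"
  proof -
    have "int k \<le> \<lfloor>L 1 / l0\<rfloor>"
    proof -
      have "L 1 / l0 = L 1 * of_nat k / mn" unfolding l0_def using mnp k_pos by simp
      also have "\<dots> \<ge> of_nat k"
      proof -
        have "mn * of_nat k \<le> L 1 * of_nat k" using mnle[of 1] n_pos by (intro mult_right_mono) auto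
        then show ?thesis using mnp by (simp add: le_divide_eq mult.commute)
      qed
      finally show ?thesis by (simp add: le_floor_iff)
    qed
    also have "\<dots> \<le> m_pieces L n l0" unfolding m_pieces_def
      by (rule member_le_sum) (use n_pos L_pos l0p in \<open>auto intro!: divide_nonneg_pos less_imp_le\<close>)
    finally show ?thesis unfolding feasible_def using l0p by simp
  qed
  define T where "T = {L i / of_int j | i j. i \<in> {1..n} \<and> 1 \<le> j \<and> j \<le> \<lfloor>L i / l0\<rfloor> \<and> feasible L n k (L i / of_int j)}"
  have Tfin: "finite T"
  proof (rule finite_subset)
    show "T \<subseteq> (\<lambda>(i,j). L i / of_int j) ` (SIGMA i:{1..n}. {1..\<lfloor>L i / l0\<rfloor>})"
      unfolding T_def by force
  qed auto
  obtain ia ja where a: "ia\<in>{1..n}" "1 \<le> ja" "ja \<le> \<lfloor>L ia / l0\<rfloor>" "l0 \<le> L ia / of_int ja"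
      "feasible L n k (L ia / of_int ja)"
    using round_up[OF L_pos k_pos fl0] by blast
  have aT: "L ia / of_int ja \<in> T" unfolding T_def using a by blast
  then have Tne: "T \<noteq> {}" by auto
  define ls where "ls = Max T"
  have lsT: "ls \<in> T" unfolding ls_def using Tfin Tne by simp
  then obtain i0 j0 where ij: "i0 \<in> {1..n}" "1 \<le> j0" "ls = L i0 / of_int j0" "feasible L n k ls"
    unfolding T_def by blast
  have upper: "l \<le> ls" if fl: "feasible L n k l" for l
  proof (cases "l \<le> l0")
    case True
    have "L ia / of_int ja \<le> ls" unfolding ls_def using Tfin aT by simp
    then show ?thesis using True a by linarith
  next
    case False
    obtain i j where b: "i\<in>{1..n}" "1 \<le> j" "j \<le> \<lfloor>L i / l\<rfloor>" "l \<le> L i / of_int j"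
      "feasible L n k (L i / of_int j)"
      using round_up[OF L_pos k_pos fl] by blast
    have "L i / l \<le> L i / l0" using L_pos b(1) l0p False by (intro divide_left_mono) (auto intro: less_imp_le)
    then have "\<lfloor>L i / l\<rfloor> \<le> \<lfloor>L i / l0\<rfloor>" by (rule floor_mono)
    then have "L i / of_int j \<in> T" unfolding T_def using b by fastforce
    then have "L i / of_int j \<le> ls" unfolding ls_def using Tfin by simp
    then show ?thesis using b by linarith
  qed
  have lsp: "ls > 0" using ij unfolding feasible_def by auto
  have Li0: "L i0 > 0" using L_pos ij by auto
  have opt: "opt_len L n k = ls"
    unfolding opt_len_def
  proof (rule the_equality)
    show "feasible L n k ls \<and> (\<forall>l'. feasible L n k l' \<longrightarrow> c_cuts L n ls \<le> c_cuts L n l')"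
      using ij upper c_mono[OF L_pos] unfolding feasible_def by auto
  next
    fix y assume y: "feasible L n k y \<and> (\<forall>l'. feasible L n k l' \<longrightarrow> c_cuts L n y \<le> c_cuts L n l')"
    then have yle: "y \<le> ls" and yp: "y > 0" and cy: "c_cuts L n y \<le> c_cuts L n ls"
      using upper ij unfolding feasible_def by auto
    show "y = ls"
    proof (rule ccontr)
      assume "y \<noteq> ls"
      then have ylt: "y < ls" using yle by simp
      have "c_cuts L n ls < c_cuts L n y"
        unfolding c_cuts_def
      proof (rule sum_strict_mono_ex1)
        show "\<forall>x\<in>{1..n}. \<lceil>L x / ls\<rceil> - 1 \<le> \<lceil>L x / y\<rceil> - 1"
        proof
          fix x assume x: "x \<in> {1..n}"
          have "L x / ls \<le> L x / y" using L_pos x yp ylt by (intro divide_left_mono) (auto intro: less_imp_le)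
          then show "\<lceil>L x / ls\<rceil> - 1 \<le> \<lceil>L x / y\<rceil> - 1" using ceiling_mono[of "L x / ls" "L x / y"] by linarith
        qed
        have "L i0 / ls = of_int j0" using ij Li0 by simp
        moreover have "L i0 / ls < L i0 / y" using Li0 yp ylt by (simp add: divide_strict_left_mono)
        ultimately have "of_int j0 < L i0 / y" by simp
        then have "j0 < \<lceil>L i0 / y\<rceil>" by (simp add: less_ceiling_iff)
        moreover have "\<lceil>L i0 / ls\<rceil> = j0" using \<open>L i0 / ls = of_int j0\<close> by simp
        ultimately show "\<exists>a\<in>{1..n}. \<lceil>L a / ls\<rceil> - 1 < \<lceil>L a / y\<rceil> - 1" using ij by force
      qed simp
      then show False using cy by simp
    qed
  qed
  have lsle: "ls \<le> L i0" using ij Li0 by (simp add: divide_le_eq)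
  have i0I: "i0 \<in> I"
  proof (rule ccontr)
    assume "i0 \<notin> I"
    then have "feasible L n k (L i0)" "L i0 \<noteq> ls" using cond_iii ij opt by auto
    then show False using upper lsle by force
  qed
  define j where "j = nat j0"
  have jj: "of_int j0 = (of_nat j :: rat)" "j \<ge> 1" unfolding j_def using ij by auto
  have ju: "j \<le> fu i0"
  proof -
    have "L i0 / of_nat (fu i0) \<le> L i0 / of_nat j" using upper cond_ii i0I ij jj by simp
    moreover
    { assume "fu i0 < j"
      then have "(of_nat (fu i0)::rat) < of_nat j" "(0::rat) < of_nat (fu i0)" using fu_pos i0I by auto
      then have "L i0 / of_nat j < L i0 / of_nat (fu i0)" using Li0
        by (intro divide_strict_left_mono) auto }
    ultimately show ?thesis by force
  qed
  have jl: "fl i0 \<le> j"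
  proof (rule ccontr)
    assume "\<not> fl i0 \<le> j"
    then have gt: "fl i0 - 1 \<ge> j" "fl i0 \<noteq> 1" using jj by auto
    have "L i0 / of_nat (fl i0 - 1) \<le> L i0 / of_nat j"
      using Li0 gt jj by (intro divide_left_mono) auto
    then have "feasible L n k (L i0 / of_nat (fl i0 - 1))"
      using feas_down[OF L_pos] ij jj gt Li0 by auto
    then show False using cond_i i0I gt by auto
  qed
  have mem: "ls \<in># mset (map (\<lambda>j. L i0 / of_nat j) [fl i0..<Suc (fu i0)])"
    using ij jj ju jl by force
  have Ifin: "finite I" using I_sub finite_subset by blast
  have "candidates L I fl fu = mset (map (\<lambda>j. L i0 / of_nat j) [fl i0..<Suc (fu i0)])
      + (\<Sum>i\<in>I - {i0}. mset (map (\<lambda>j. L i / of_nat j) [fl i..<Suc (fu i)]))"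
    unfolding candidates_def using Ifin i0I by (simp add: sum.remove)
  then show ?thesis using mem opt by simp
qed

end
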